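(* Let $\alpha>0$ and $\beta\in\mathbb{R}$ satisfy one of: $\beta<\alpha<1$; or $\beta<1<\alpha$; or $\beta<\alpha=1$. Then the $\beta$-Ces\`aro operator $C_\beta$ is a compact linear operator from $(\mathcal{B}_\alpha^0,\|\cdot\|_{\mathcal{B}_\alpha})$ to itself.
   Context: $\mathbb{D}=\{z\in\mathbb{C}:|z|<1\}$. For $\alpha>0$, the $\alpha$-Bloch space $\mathcal{B}_\alpha$ is the space of analytic functions $f$ on $\mathbb{D}$ with $\|f\|_{\mathcal{B}_\alpha}:=\sup_{z\in\mathbb{D}}(1-|z|^2)^\alpha|f'(z)|<\infty$. $\mathcal{B}_\alpha^0=\{f\in\mathcal{B}_\alpha: f(0)=0\}$, normed by $\|\cdot\|_{\mathcal{B}_\alpha}$. For $\beta\in\mathbb{R}$, the $\beta$-Ces\`aro operator is $C_\beta(f)(z)=\int_0^z \frac{f(w)}{w(1-w)^\beta}\,dw$ for analytic $f$ on $\mathbb{D}$ with $f(0)=0$, where $(1-w)^{\beta}$ is defined by the principal branch. *)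

theory Defs
  imports "HOL-Complex_Analysis.Complex_Analysis"
begin

abbreviation unit_disc :: "complex set" where
  "unit_disc \<equiv> ball 0 1"

definition bloch_norm :: "real \<Rightarrow> (complex \<Rightarrow> complex) \<Rightarrow> real" where
  "bloch_norm \<alpha> f = (SUP z\<in>unit_disc. (1 - (cmod z)\<^sup>2) powr \<alpha> * cmod (deriv f z))"

definition bloch_space :: "real \<Rightarrow> (complex \<Rightarrow> complex) set" where
  "bloch_space \<alpha> = {f. f holomorphic_on unit_disc \<and>
      bdd_above ((\<lambda>z. (1 - (cmod z)\<^sup>2) powr \<alpha> * cmod (deriv f z)) ` unit_disc)}"

definition bloch0 :: "real \<Rightarrow> (complex \<Rightarrow> complex) set" where
  "bloch0 \<alpha> = {f \<in> bloch_space \<alpha>. f 0 = 0}"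

definition cesaro_op :: "real \<Rightarrow> (complex \<Rightarrow> complex) \<Rightarrow> complex \<Rightarrow> complex" where
  "cesaro_op \<beta> f z =
     contour_integral (linepath 0 z) (\<lambda>w. f w / (w * (1 - w) powr (complex_of_real \<beta>)))"

definition compact_bloch0_operator ::
  "real \<Rightarrow> ((complex \<Rightarrow> complex) \<Rightarrow> complex \<Rightarrow> complex) \<Rightarrow> bool" where
  "compact_bloch0_operator \<alpha> T \<longleftrightarrow>
     (\<forall>f\<in>bloch0 \<alpha>. T f \<in> bloch0 \<alpha>) \<and>
     (\<forall>f\<in>bloch0 \<alpha>. \<forall>g\<in>bloch0 \<alpha>. \<forall>a b::complex. \<forall>z\<in>unit_disc.
         T (\<lambda>w. a * f w + b * g w) z = a * T f z + b * T g z) \<and>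
     (\<forall>F::nat \<Rightarrow> complex \<Rightarrow> complex. (\<forall>n. F n \<in> bloch0 \<alpha>) \<and>
         bdd_above (range (\<lambda>n. bloch_norm \<alpha> (F n))) \<longrightarrow>
       (\<exists>r g. strict_mono r \<and> g \<in> bloch0 \<alpha> \<and>
          (\<lambda>n. bloch_norm \<alpha> (\<lambda>z. T (F (r n)) z - g z)) \<longlonglongrightarrow> 0))"

end

theory Submission
  imports Defs
begin

lemma re_deriv:
  fixes H :: "real \<Rightarrow> complex"
  assumes "(H has_vector_derivative v) (at t)"
  shows "((\<lambda>t. Re (H t)) has_real_derivative Re v) (at t)"
proof -
  have "((\<lambda>x. Re (H x)) has_derivative (\<lambda>h. Re (h *\<^sub>R v))) (at t)"
    using bounded_linear.has_derivative[OF bounded_linear_Re assms[unfolded has_vector_derivative_def]] .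
  moreover have "(\<lambda>h. Re (h *\<^sub>R v)) = (*) (Re v)" by (auto simp: fun_eq_iff)
  ultimately show ?thesis unfolding has_field_derivative_def by simp
qed

lemma growth:
  fixes f :: "complex \<Rightarrow> complex"
  assumes hol: "f holomorphic_on ball 0 1" and f0: "f 0 = 0" and dpos: "\<delta> > 0" and M: "M \<ge> 0"
    and bd: "\<And>w. w \<in> ball 0 1 \<Longrightarrow> cmod (deriv f w) \<le> M * (1 - cmod w) powr (-\<delta>-1)"
    and z: "z \<in> ball 0 1"
  shows "cmod (f z) \<le> M * (1 - cmod z) powr (-\<delta>) / \<delta>"
proof (cases "z = 0")
  case True thus ?thesis using f0 M dpos by simp
next
  case False
  define s where "s = cmod z"
  define u where "u = z / of_real s"
  have s: "0 < s" "s < 1" using False z by (auto simp: s_def)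
  have u: "cmod u = 1" using s by (simp add: u_def s_def norm_divide)
  have zu: "z = of_real s * u" using s by (simp add: u_def)
  define c where "c = cnj (f z) / of_real (cmod (f z))"
  have c1: "cmod c \<le> 1" by (simp add: c_def norm_divide divide_le_eq_1)
  have cf: "Re (c * f z) = cmod (f z)"
  proof (cases "f z = 0")
    case True then show ?thesis by (simp add: c_def)
  next
    case False
    have "c * f z = (f z * cnj (f z)) / of_real (cmod (f z))" by (simp add: c_def mult.commute)
    also have "\<dots> = of_real ((cmod (f z))\<^sup>2) / of_real (cmod (f z))" by (simp only: complex_norm_square)
    also have "\<dots> = of_real ((cmod (f z))\<^sup>2 / cmod (f z))" by simp
    finally have "c * f z = of_real ((cmod (f z))\<^sup>2 / cmod (f z))" .
    then show ?thesis using False by (simp add: power2_eq_square)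
  qed
  define \<phi> where "\<phi> t = Re (c * f (of_real t * u)) - M * (1 - t) powr (-\<delta>) / \<delta>" for t
  have "\<phi> s \<le> \<phi> 0"
  proof (rule DERIV_nonpos_imp_nonincreasing[OF less_imp_le[OF s(1)]])
    fix t assume t: "0 \<le> t" "t \<le> s"
    have tin: "of_real t * u \<in> ball 0 1" using t s u by (simp add: norm_mult)
    have fd: "(f has_field_derivative deriv f (of_real t * u)) (at (of_real t * u))"
      using hol tin by (meson DERIV_deriv_iff_field_differentiable holomorphic_on_imp_differentiable_at open_ball)
    have "((\<lambda>x. c * f (x * u)) has_field_derivative (c * (deriv f (of_real t * u) * u))) (at (of_real t))"
    proof (rule DERIV_cmult)
      have g: "((\<lambda>x. x * u) has_field_derivative u) (at (of_real t))"
        by (auto intro!: derivative_eq_intros)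
      show "((\<lambda>x. f (x * u)) has_field_derivative deriv f (of_real t * u) * u) (at (of_real t))"
        using DERIV_chain2[of f "deriv f (of_real t * u)" "\<lambda>x. x * u" "of_real t" u UNIV] fd g by simp
    qed
    then have "((\<lambda>x. c * f (of_real x * u)) has_vector_derivative (c * (deriv f (of_real t * u) * u))) (at t)"
      by (rule has_vector_derivative_real_field)
    then have d1: "((\<lambda>x. Re (c * f (of_real x * u))) has_real_derivative Re (c * (deriv f (of_real t * u) * u))) (at t)"
      by (rule re_deriv)
    have d2: "((\<lambda>x. M * (1 - x) powr (-\<delta>) / \<delta>) has_real_derivative M * (1 - t) powr (-\<delta>-1)) (at t)"
      using t s dpos by (auto intro!: derivative_eq_intros simp: field_simps)
    have "Re (c * (deriv f (of_real t * u) * u)) \<le> cmod (c * (deriv f (of_real t * u) * u))"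
      by (rule complex_Re_le_cmod)
    also have "\<dots> \<le> cmod (deriv f (of_real t * u))"
      using c1 u by (simp add: norm_mult mult_left_le_one_le)
    also have "\<dots> \<le> M * (1 - t) powr (-\<delta>-1)"
      using bd[OF tin] u t by (simp add: norm_mult)
    finally show "\<exists>y. (\<phi> has_real_derivative y) (at t) \<and> y \<le> 0"
      using DERIV_diff[OF d1 d2] unfolding \<phi>_def[abs_def] by auto
  qed
  then have "cmod (f z) - M * (1 - s) powr (-\<delta>) / \<delta> \<le> - M / \<delta>"
    using cf f0 by (simp add: \<phi>_def zu[symmetric])
  then show ?thesis using M dpos by (simp add: s_def) (smt (verit) divide_nonneg_nonneg)
qed

definition Gc :: "real \<Rightarrow> (complex \<Rightarrow> complex) \<Rightarrow> complex \<Rightarrow> complex" where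
  "Gc \<beta> f z = (if z = 0 then deriv f 0 else f z / (z * (1 - z) powr of_real \<beta>))"

lemma one_minus_notin: "w \<in> ball (0::complex) 1 \<Longrightarrow> 1 - w \<notin> \<real>\<^sub>\<le>\<^sub>0"
proof
  assume w: "w \<in> ball 0 1" and "1 - w \<in> \<real>\<^sub>\<le>\<^sub>0"
  then have "Re (1 - w) \<le> 0" by (auto simp: complex_nonpos_Reals_iff)
  moreover have "Re w < 1" using w abs_Re_le_cmod[of w] by auto
  ultimately show False by simp
qed

lemma P_hol: "(\<lambda>w. (1 - w) powr complex_of_real \<beta>) holomorphic_on ball 0 1"
  by (rule holomorphic_on_powr) (auto intro!: holomorphic_intros one_minus_notin)

lemma P_nz: "w \<in> ball 0 1 \<Longrightarrow> (1 - w) powr complex_of_real \<beta> \<noteq> 0"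
  by simp (metis norm_one order.irrefl)

lemma P_norm: "cmod ((1 - w) powr complex_of_real \<beta>) = cmod (1 - w) powr \<beta>"
  by (simp add: norm_powr_real_powr')

lemma Gc_hol:
  assumes hol: "f holomorphic_on ball 0 1" and f0: "f 0 = 0"
  shows "Gc \<beta> f holomorphic_on ball 0 1"
proof -
  have Q: "(\<lambda>z. if z = 0 then deriv f 0 else (f z - f 0) / (z - 0)) holomorphic_on ball 0 1"
    by (rule pole_lemma[OF hol]) simp
  have "(\<lambda>z. (if z = 0 then deriv f 0 else (f z - f 0) / (z - 0)) / (1 - z) powr complex_of_real \<beta>) holomorphic_on ball 0 1"
    by (rule holomorphic_on_divide[OF Q P_hol]) (rule P_nz)
  moreover have "(\<lambda>z. (if z = 0 then deriv f 0 else (f z - f 0) / (z - 0)) / (1 - z) powr complex_of_real \<beta>) = Gc \<beta> f"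
    by (auto simp: fun_eq_iff Gc_def f0)
  ultimately show ?thesis by simp
qed

lemma cesaro_basic:
  fixes \<beta> :: real
  assumes hol: "f holomorphic_on ball 0 1" and f0: "f 0 = 0"
  obtains g where
    "\<And>z. z \<in> ball 0 1 \<Longrightarrow> ((\<lambda>w. f w / (w * (1 - w) powr complex_of_real \<beta>)) has_contour_integral (g z - g 0)) (linepath 0 z)"
    "\<And>z. z \<in> ball 0 1 \<Longrightarrow> (g has_field_derivative Gc \<beta> f z) (at z)"
proof -
  obtain g where g: "\<And>x. x \<in> ball 0 1 \<Longrightarrow> (g has_field_derivative Gc \<beta> f x) (at x within ball 0 1)"
    using holomorphic_convex_primitive'[OF convex_ball open_ball Gc_hol[where \<beta>=\<beta>, OF hol f0]] by blast
  have g': "(g has_field_derivative Gc \<beta> f x) (at x)" if "x \<in> ball 0 1" for x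
    using g[OF that] unfolding at_within_open[OF that open_ball] .
  have main: "((\<lambda>w. f w / (w * (1 - w) powr complex_of_real \<beta>)) has_contour_integral (g z - g 0)) (linepath 0 z)"
    if z: "z \<in> ball 0 1" for z
  proof -
    have pi: "path_image (linepath 0 z) \<subseteq> ball 0 1"
      unfolding path_image_linepath by (rule closed_segment_subset) (use z in auto)
    have "(Gc \<beta> f has_contour_integral (g z - g 0)) (linepath 0 z)"
      using contour_integral_primitive[OF g valid_path_linepath pi] by (simp only: pathfinish_linepath pathstart_linepath)
    then have hG: "((\<lambda>x. Gc \<beta> f (linepath 0 z x) * vector_derivative (linepath 0 z) (at x within {0..1})) has_integral (g z - g 0)) {0..1}"
      unfolding has_contour_integral_def .
    have eq: "f (linepath 0 z x) / (linepath 0 z x * (1 - linepath 0 z x) powr complex_of_real \<beta>) *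
              vector_derivative (linepath 0 z) (at x within {0..1}) =
            Gc \<beta> f (linepath 0 z x) * vector_derivative (linepath 0 z) (at x within {0..1})"
      if x: "x \<in> {0..1::real} - {0}" for x
    proof -
      have vd: "vector_derivative (linepath 0 z) (at x within {0..1}) = z"
        using x by (simp add: vector_derivative_linepath_within)
      show ?thesis
      proof (cases "z = 0")
        case True then show ?thesis unfolding vd by simp
      next
        case False
        then have "linepath 0 z x \<noteq> 0" using x by (simp add: linepath_def scaleR_conv_of_real)
        then show ?thesis by (simp add: Gc_def)
      qed
    qed
    show ?thesis unfolding has_contour_integral_def
      by (rule has_integral_spike_finite[of "{0}", OF _ eq hG]) simp_all
  qed
  show ?thesis by (rule that[OF main g'])
qed

lemma cesaro_deriv:
  assumes hol: "f holomorphic_on ball 0 1" and f0: "f 0 = 0" and z: "z \<in> ball 0 1"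
  shows "(cesaro_op \<beta> f has_field_derivative Gc \<beta> f z) (at z)"
proof -
  obtain g where g1: "\<And>z. z \<in> ball 0 1 \<Longrightarrow> ((\<lambda>w. f w / (w * (1 - w) powr complex_of_real \<beta>)) has_contour_integral (g z - g 0)) (linepath 0 z)"
    and g2: "\<And>z. z \<in> ball 0 1 \<Longrightarrow> (g has_field_derivative Gc \<beta> f z) (at z)"
    using cesaro_basic[OF hol f0] by blast
  have "((\<lambda>z. g z - g 0) has_field_derivative Gc \<beta> f z) (at z)"
    using g2[OF z] by (auto intro!: derivative_eq_intros)
  then show ?thesis
    by (rule has_field_derivative_transform_within_open[OF _ open_ball z])
       (simp add: cesaro_op_def contour_integral_unique[OF g1])
qed

lemma cesaro_0:
  assumes hol: "f holomorphic_on ball 0 1" and f0: "f 0 = 0"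
  shows "cesaro_op \<beta> f 0 = 0"
proof -
  obtain g where g1: "\<And>z. z \<in> ball 0 1 \<Longrightarrow> ((\<lambda>w. f w / (w * (1 - w) powr complex_of_real \<beta>)) has_contour_integral (g z - g 0)) (linepath 0 z)"
    using cesaro_basic[OF hol f0] by blast
  show ?thesis using contour_integral_unique[OF g1[of 0]] by (simp add: cesaro_op_def)
qed

lemma cesaro_lin:
  assumes "f holomorphic_on ball 0 1" "f 0 = 0" "h holomorphic_on ball 0 1" "h 0 = 0" "z \<in> ball 0 1"
  shows "cesaro_op \<beta> (\<lambda>w. a * f w + b * h w) z = a * cesaro_op \<beta> f z + b * cesaro_op \<beta> h z"
proof -
  obtain g where g1: "\<And>z. z \<in> ball 0 1 \<Longrightarrow> ((\<lambda>w. f w / (w * (1 - w) powr complex_of_real \<beta>)) has_contour_integral (g z - g 0)) (linepath 0 z)"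
    using cesaro_basic[OF assms(1,2)] by blast
  obtain k where k1: "\<And>z. z \<in> ball 0 1 \<Longrightarrow> ((\<lambda>w. h w / (w * (1 - w) powr complex_of_real \<beta>)) has_contour_integral (k z - k 0)) (linepath 0 z)"
    using cesaro_basic[OF assms(3,4)] by blast
  have "((\<lambda>w. a * (f w / (w * (1 - w) powr complex_of_real \<beta>)) + b * (h w / (w * (1 - w) powr complex_of_real \<beta>)))
         has_contour_integral (a * (g z - g 0) + b * (k z - k 0))) (linepath 0 z)"
    by (intro has_contour_integral_add has_contour_integral_lmul g1 k1 assms(5))
  then have "((\<lambda>w. (a * f w + b * h w) / (w * (1 - w) powr complex_of_real \<beta>))
         has_contour_integral (a * (g z - g 0) + b * (k z - k 0))) (linepath 0 z)"
  proof (rule has_contour_integral_eq)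
    fix x :: complex
    show "a * (f x / (x * (1 - x) powr complex_of_real \<beta>)) + b * (h x / (x * (1 - x) powr complex_of_real \<beta>)) =
          (a * f x + b * h x) / (x * (1 - x) powr complex_of_real \<beta>)"
      by (simp only: add_divide_distrib times_divide_eq_right)
  qed
  then have e1: "cesaro_op \<beta> (\<lambda>w. a * f w + b * h w) z = a * (g z - g 0) + b * (k z - k 0)"
    unfolding cesaro_op_def by (rule contour_integral_unique)
  have e2: "cesaro_op \<beta> f z = g z - g 0"
    unfolding cesaro_op_def by (rule contour_integral_unique[OF g1[OF assms(5)]])
  have e3: "cesaro_op \<beta> h z = k z - k 0"
    unfolding cesaro_op_def by (rule contour_integral_unique[OF k1[OF assms(5)]])
  show ?thesis by (simp only: e1 e2 e3)
qed


definition bp :: "real \<Rightarrow> real" where "bp \<beta> = max \<beta> 0"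
definition dl :: "real \<Rightarrow> real \<Rightarrow> real" where "dl \<alpha> \<beta> = (max 0 (\<alpha> - 1) + (\<alpha> - bp \<beta>)) / 2"
definition epsc :: "real \<Rightarrow> real \<Rightarrow> real" where "epsc \<alpha> \<beta> = \<alpha> - dl \<alpha> \<beta> - bp \<beta>"
definition Kc :: "real \<Rightarrow> real \<Rightarrow> real" where "Kc \<alpha> \<beta> = 2 powr \<alpha> * 2 * 2 powr \<bar>\<beta>\<bar> / dl \<alpha> \<beta>"

lemma consts_facts:
  assumes "\<alpha> > 0" "\<beta> < \<alpha>" "\<beta> < 1"
  shows "dl \<alpha> \<beta> > 0" "dl \<alpha> \<beta> \<ge> \<alpha> - 1" "epsc \<alpha> \<beta> > 0" "Kc \<alpha> \<beta> > 0" "bp \<beta> \<ge> 0"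
  using assms unfolding dl_def epsc_def Kc_def bp_def by (auto simp: max_def field_simps)

lemma aux_pow:
  fixes m q \<beta> :: real
  assumes "0 < m" "m \<le> q" "q \<le> 2" "m \<le> 1"
  shows "q powr (-\<beta>) \<le> 2 powr \<bar>\<beta>\<bar> * m powr (- bp \<beta>)"
proof (cases "\<beta> \<ge> 0")
  case True
  have "q powr (-\<beta>) \<le> m powr (-\<beta>)" by (rule powr_mono2') (use True assms in auto)
  also have "\<dots> \<le> 2 powr \<bar>\<beta>\<bar> * m powr (-\<beta>)"
    using ge_one_powr_ge_zero[of 2 "\<bar>\<beta>\<bar>"] by (simp add: mult_le_cancel_right1)
  finally show ?thesis using True by (simp add: bp_def)
next
  case False
  have "q powr (-\<beta>) \<le> 2 powr (-\<beta>)" by (rule powr_mono2) (use False assms in auto)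
  then show ?thesis using False assms by (simp add: bp_def)
qed

lemma key_bound:
  fixes \<alpha> \<beta> M r \<eta> :: real and f :: "complex \<Rightarrow> complex"
  assumes a: "\<alpha> > 0" and b1: "\<beta> < \<alpha>" and b2: "\<beta> < 1"
    and hol: "f holomorphic_on ball 0 1" and f0: "f 0 = 0" and M: "M \<ge> 0"
    and bd: "\<And>w. w \<in> ball 0 1 \<Longrightarrow> (1 - (cmod w)\<^sup>2) powr \<alpha> * cmod (deriv f w) \<le> M"
    and r: "1/2 \<le> r" "r < 1"
    and eta: "\<And>w. w \<in> cball 0 r \<Longrightarrow> cmod (deriv f w) \<le> \<eta>"
    and z: "z \<in> ball 0 1"
  shows "(1 - (cmod z)\<^sup>2) powr \<alpha> * cmod (Gc \<beta> f z)
         \<le> max (Kc \<alpha> \<beta> * M * (1 - r) powr (epsc \<alpha> \<beta>)) (2 powr \<bar>\<beta>\<bar> * \<eta> * (1 - r) powr (- bp \<beta>))"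
proof -
  note cf = consts_facts[OF a b1 b2]
  define s where "s = cmod z"
  have s: "0 \<le> s" "s < 1" using z by (auto simp: s_def)
  have "cmod (deriv f 0) \<le> \<eta>" using eta[of 0] r by simp
  then have eta0: "0 \<le> \<eta>" by (meson norm_ge_zero order_trans)
  have onez: "cmod (1 - z) \<le> 2" using norm_triangle_ineq4[of 1 z] s by (simp add: s_def)
  have onez2: "1 - s \<le> cmod (1 - z)" using norm_triangle_ineq2[of 1 z] by (simp add: s_def)
  have normG: "cmod (Gc \<beta> f z) = cmod (f z) / s * cmod (1 - z) powr (-\<beta>)" if "z \<noteq> 0"
    using that by (simp add: Gc_def norm_divide norm_mult P_norm s_def powr_minus_divide)
  show ?thesis
  proof (cases "s > r")
    case True
    then have zn: "z \<noteq> 0" and s2: "1/2 \<le> s" using r by (auto simp: s_def)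
    have dbound: "cmod (deriv f w) \<le> M * (1 - cmod w) powr (- dl \<alpha> \<beta> - 1)" if w: "w \<in> ball 0 1" for w
    proof -
      have w1: "cmod w < 1" using w by simp
      have p1: "(1 - cmod w) powr \<alpha> \<le> (1 - (cmod w)\<^sup>2) powr \<alpha>"
        by (rule powr_mono2) (use a w1 in \<open>auto simp: power2_eq_square intro!: mult_left_le_one_le\<close>)
      have pos: "0 < (1 - cmod w) powr \<alpha>" using w1 by simp
      have "(1 - cmod w) powr \<alpha> * cmod (deriv f w) \<le> M"
        using bd[OF w] p1 by (meson mult_right_mono norm_ge_zero order_trans)
      then have "cmod (deriv f w) \<le> M * (1 - cmod w) powr (-\<alpha>)"
        using pos by (simp add: powr_minus_divide field_simps)
      also have "\<dots> \<le> M * (1 - cmod w) powr (- dl \<alpha> \<beta> - 1)"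
        by (rule mult_left_mono[OF powr_mono' M]) (use cf w1 in auto)
      finally show ?thesis .
    qed
    have gr: "cmod (f z) \<le> M * (1 - s) powr (- dl \<alpha> \<beta>) / dl \<alpha> \<beta>"
      using growth[OF hol f0 cf(1) M dbound z] by (simp add: s_def)
    have w1: "(1 - s\<^sup>2) powr \<alpha> \<le> 2 powr \<alpha> * (1 - s) powr \<alpha>"
    proof -
      have "(1 - s\<^sup>2) powr \<alpha> \<le> (2 * (1 - s)) powr \<alpha>"
      proof (rule powr_mono2)
        have "s * s \<le> 1" using s by (simp add: mult_le_one)
        then show "0 \<le> 1 - s\<^sup>2" by (simp add: power2_eq_square)
        have "0 \<le> (1 - s) * (1 - s)" by simp
        then show "1 - s\<^sup>2 \<le> 2 * (1 - s)" by (simp add: power2_eq_square algebra_simps)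
      qed (use a in auto)
      also have "(2 * (1 - s)) powr \<alpha> = 2 powr \<alpha> * (1 - s) powr \<alpha>"
        by (rule powr_mult)
      finally show ?thesis .
    qed
    have w2: "cmod (1 - z) powr (-\<beta>) \<le> 2 powr \<bar>\<beta>\<bar> * (1 - s) powr (- bp \<beta>)"
      by (rule aux_pow) (use s onez onez2 in auto)
    have w3: "1 / s \<le> 2" using s2 by (simp add: field_simps)
    have "(1 - s\<^sup>2) powr \<alpha> * cmod (Gc \<beta> f z) = (1 - s\<^sup>2) powr \<alpha> * cmod (f z) * (1 / s) * cmod (1 - z) powr (-\<beta>)"
      using normG[OF zn] by simp
    also have "\<dots> \<le> (2 powr \<alpha> * (1 - s) powr \<alpha>) * (M * (1 - s) powr (- dl \<alpha> \<beta>) / dl \<alpha> \<beta>) * 2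
                   * (2 powr \<bar>\<beta>\<bar> * (1 - s) powr (- bp \<beta>))"
      by (intro mult_mono w1 w2 w3 gr) (use s cf M in auto)
    also have "\<dots> = Kc \<alpha> \<beta> * M * ((1 - s) powr \<alpha> * (1 - s) powr (- dl \<alpha> \<beta>) * (1 - s) powr (- bp \<beta>))"
      by (simp add: Kc_def)
    also have "(1 - s) powr \<alpha> * (1 - s) powr (- dl \<alpha> \<beta>) * (1 - s) powr (- bp \<beta>) = (1 - s) powr (epsc \<alpha> \<beta>)"
      by (simp add: epsc_def powr_add[symmetric])
    also have "Kc \<alpha> \<beta> * M * (1 - s) powr (epsc \<alpha> \<beta>) \<le> Kc \<alpha> \<beta> * M * (1 - r) powr (epsc \<alpha> \<beta>)"
      by (intro mult_left_mono powr_mono2) (use cf M True s in auto)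
    finally show ?thesis by (simp add: s_def)
  next
    case False
    then have zr: "z \<in> cball 0 r" by (simp add: s_def)
    have c1: "(1 - s\<^sup>2) powr \<alpha> \<le> 1"
    proof (rule powr_le1)
      have "s * s \<le> 1" using s by (simp add: mult_le_one)
      then show "\<bar>1 - s\<^sup>2\<bar> \<le> 1" using s by (simp add: power2_eq_square)
    qed (use a in auto)
    have c2: "1 \<le> 2 powr \<bar>\<beta>\<bar> * (1 - r) powr (- bp \<beta>)"
    proof -
      have "1 \<le> 2 powr \<bar>\<beta>\<bar>" by (rule ge_one_powr_ge_zero) auto
      moreover have "1 \<le> (1 - r) powr (- bp \<beta>)"
        using powr_mono'[of "- bp \<beta>" 0 "1 - r"] cf r by simp
      ultimately show ?thesis by (metis mult_mono' mult_1 zero_le_one)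
    qed
    show ?thesis
    proof (cases "z = 0")
      case True
      have "(1 - (cmod z)\<^sup>2) powr \<alpha> * cmod (Gc \<beta> f z) = cmod (deriv f 0)"
        using True by (simp add: Gc_def)
      also have "\<dots> \<le> \<eta>" using eta[of 0] r by simp
      also have "\<dots> \<le> 2 powr \<bar>\<beta>\<bar> * \<eta> * (1 - r) powr (- bp \<beta>)"
        using mult_left_mono[OF c2 eta0] by (simp add: ac_simps)
      finally show ?thesis by simp
    next
      case zn: False
      have fz: "cmod (f z) \<le> \<eta> * s"
      proof -
        have "cmod (f z - f 0) \<le> \<eta> * cmod (z - 0)"
        proof (rule field_differentiable_bound[OF convex_cball])
          fix w :: complex assume w: "w \<in> cball 0 r"
          then have "w \<in> ball 0 1" using r by simp
          then have "(f has_field_derivative deriv f w) (at w)"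
            using hol by (meson DERIV_deriv_iff_field_differentiable holomorphic_on_imp_differentiable_at open_ball)
          then show "(f has_field_derivative deriv f w) (at w within cball 0 r)"
            by (rule has_field_derivative_at_within)
          show "cmod (deriv f w) \<le> \<eta>" by (rule eta[OF w])
        qed (use zr r in auto)
        then show ?thesis using f0 by (simp add: s_def)
      qed
      have spos: "0 < s" using zn by (simp add: s_def)
      have w2: "cmod (1 - z) powr (-\<beta>) \<le> 2 powr \<bar>\<beta>\<bar> * (1 - r) powr (- bp \<beta>)"
        by (rule aux_pow) (use s onez onez2 False r in auto)
      have "(1 - s\<^sup>2) powr \<alpha> * cmod (Gc \<beta> f z) = (1 - s\<^sup>2) powr \<alpha> * (cmod (f z) / s) * cmod (1 - z) powr (-\<beta>)"
        using normG[OF zn] by simp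
      also have "\<dots> \<le> 1 * \<eta> * (2 powr \<bar>\<beta>\<bar> * (1 - r) powr (- bp \<beta>))"
        by (intro mult_mono c1 w2) (use fz spos eta0 in \<open>auto simp: field_simps\<close>)
      finally show ?thesis by (simp add: s_def ac_simps)
    qed
  qed
qed


lemma bloch_bound:
  assumes "f \<in> bloch_space \<alpha>" "z \<in> ball 0 1"
  shows "(1 - (cmod z)\<^sup>2) powr \<alpha> * cmod (deriv f z) \<le> bloch_norm \<alpha> f"
  unfolding bloch_norm_def
  by (rule cSUP_upper) (use assms in \<open>auto simp: bloch_space_def\<close>)

lemma cesaro_in:
  fixes \<alpha> \<beta> :: real
  assumes a: "\<alpha> > 0" and b1: "\<beta> < \<alpha>" and b2: "\<beta> < 1" and f: "f \<in> bloch0 \<alpha>"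
  shows "cesaro_op \<beta> f \<in> bloch0 \<alpha>"
proof -
  have hol: "f holomorphic_on ball 0 1" and f0: "f 0 = 0" and fb: "f \<in> bloch_space \<alpha>"
    using f by (auto simp: bloch0_def bloch_space_def)
  define M where "M = bloch_norm \<alpha> f"
  have bd: "\<And>w. w \<in> ball 0 1 \<Longrightarrow> (1 - (cmod w)\<^sup>2) powr \<alpha> * cmod (deriv f w) \<le> M"
    unfolding M_def by (rule bloch_bound[OF fb])
  have M0: "M \<ge> 0" using bd[of 0] by simp (meson norm_ge_zero order_trans)
  define \<eta> where "\<eta> = M * (3/4) powr (-\<alpha>)"
  have eta: "cmod (deriv f w) \<le> \<eta>" if w: "w \<in> cball 0 (1/2)" for w
  proof -
    have w1: "cmod w \<le> 1/2" using w by simp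
    have "cmod w * cmod w \<le> (1/2) * (1/2)" using w1 by (intro mult_mono) auto
    then have "3/4 \<le> 1 - (cmod w)\<^sup>2" by (simp add: power2_eq_square)
    then have p: "(3/4) powr \<alpha> \<le> (1 - (cmod w)\<^sup>2) powr \<alpha>" by (intro powr_mono2) (use a in auto)
    have wb: "w \<in> ball 0 1" using w1 by simp
    have "(3/4) powr \<alpha> * cmod (deriv f w) \<le> (1 - (cmod w)\<^sup>2) powr \<alpha> * cmod (deriv f w)"
      by (rule mult_right_mono[OF p norm_ge_zero])
    also have "\<dots> \<le> M" by (rule bd[OF wb])
    finally have "(3/4) powr \<alpha> * cmod (deriv f w) \<le> M" .
    then show ?thesis by (simp add: \<eta>_def powr_minus_divide field_simps)
  qed
  have der: "\<And>z. z \<in> ball 0 1 \<Longrightarrow> (cesaro_op \<beta> f has_field_derivative Gc \<beta> f z) (at z)"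
    by (rule cesaro_deriv[OF hol f0])
  have "cesaro_op \<beta> f holomorphic_on ball 0 1"
    unfolding holomorphic_on_open[OF open_ball] using der by blast
  moreover have "cesaro_op \<beta> f 0 = 0" by (rule cesaro_0[OF hol f0])
  moreover have "bdd_above ((\<lambda>z. (1 - (cmod z)\<^sup>2) powr \<alpha> * cmod (deriv (cesaro_op \<beta> f) z)) ` ball 0 1)"
  proof (rule bdd_aboveI2)
    fix z :: complex assume z: "z \<in> ball 0 1"
    show "(1 - (cmod z)\<^sup>2) powr \<alpha> * cmod (deriv (cesaro_op \<beta> f) z)
          \<le> max (Kc \<alpha> \<beta> * M * (1 - 1/2) powr (epsc \<alpha> \<beta>)) (2 powr \<bar>\<beta>\<bar> * \<eta> * (1 - 1/2) powr (- bp \<beta>))"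
      unfolding DERIV_imp_deriv[OF der[OF z]]
      by (rule key_bound[OF a b1 b2 hol f0 M0 bd _ _ eta z]) auto
  qed
  ultimately show ?thesis by (simp add: bloch0_def bloch_space_def)
qed


theorem theorem3p4:
  fixes \<alpha> \<beta> :: real
  assumes "\<alpha> > 0"
    and "(\<beta> < \<alpha> \<and> \<alpha> < 1) \<or> (\<beta> < 1 \<and> 1 < \<alpha>) \<or> (\<beta> < \<alpha> \<and> \<alpha> = 1)"
  shows "compact_bloch0_operator \<alpha> (cesaro_op \<beta>)"
proof -
  have a: "\<alpha> > 0" and b1: "\<beta> < \<alpha>" and b2: "\<beta> < 1" using assms by auto
  note cf = consts_facts[OF a b1 b2]
  have P1: "\<forall>f\<in>bloch0 \<alpha>. cesaro_op \<beta> f \<in> bloch0 \<alpha>"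
    using cesaro_in[OF a b1 b2] by blast
  have P2: "\<forall>f\<in>bloch0 \<alpha>. \<forall>g\<in>bloch0 \<alpha>. \<forall>a b::complex. \<forall>z\<in>unit_disc.
         cesaro_op \<beta> (\<lambda>w. a * f w + b * g w) z = a * cesaro_op \<beta> f z + b * cesaro_op \<beta> g z"
  proof (intro ballI allI)
    fix f g :: "complex \<Rightarrow> complex" and a b :: complex and z :: complex
    assume "f \<in> bloch0 \<alpha>" "g \<in> bloch0 \<alpha>" "z \<in> unit_disc"
    then show "cesaro_op \<beta> (\<lambda>w. a * f w + b * g w) z = a * cesaro_op \<beta> f z + b * cesaro_op \<beta> g z"
      by (intro cesaro_lin) (auto simp: bloch0_def bloch_space_def)
  qed
  have P3: "\<exists>r g. strict_mono r \<and> g \<in> bloch0 \<alpha> \<and>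
          (\<lambda>n. bloch_norm \<alpha> (\<lambda>z. cesaro_op \<beta> (F (r n)) z - g z)) \<longlonglongrightarrow> 0"
    if F: "\<And>n. F n \<in> bloch0 \<alpha>" and Fb: "bdd_above (range (\<lambda>n. bloch_norm \<alpha> (F n)))"
    for F :: "nat \<Rightarrow> complex \<Rightarrow> complex"
  proof -
    obtain B where B: "\<And>n. bloch_norm \<alpha> (F n) \<le> B"
      using Fb by (auto simp: bdd_above_def)
    have holF: "\<And>n. F n holomorphic_on ball 0 1" and F0: "\<And>n. F n 0 = 0"
      and Fs: "\<And>n. F n \<in> bloch_space \<alpha>"
      using F by (auto simp: bloch0_def bloch_space_def)
    have Hn: "(1 - (cmod z)\<^sup>2) powr \<alpha> * cmod (deriv (F n) z) \<le> B" if "z \<in> ball 0 1" for n z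
      using bloch_bound[OF Fs[of n] that] B[of n] by linarith
    have B0: "B \<ge> 0" using Hn[of 0 0] by simp (meson norm_ge_zero order_trans)
    define \<H> where "\<H> = {\<phi>. \<phi> holomorphic_on ball 0 1 \<and> (\<forall>z\<in>ball 0 1. (1 - (cmod z)\<^sup>2) powr \<alpha> * cmod (\<phi> z) \<le> B)}"
    have bnd: "\<exists>C. \<forall>\<phi>\<in>\<H>. \<forall>z\<in>K. cmod (\<phi> z) \<le> C" if K: "compact K" "K \<subseteq> ball 0 1" for K
    proof (cases "K = {}")
      case True then show ?thesis by auto
    next
      case False
      obtain x0 where x0: "x0 \<in> K" "\<And>y. y \<in> K \<Longrightarrow> cmod y \<le> cmod x0"
        using continuous_attains_sup[OF K(1) False, of cmod] continuous_on_norm_id by blast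
      have x01: "cmod x0 < 1" using x0(1) K(2) by auto
      have x02: "cmod x0 * cmod x0 < 1 * 1" using x01 by (intro mult_strict_mono) auto
      have pos: "0 < (1 - (cmod x0)\<^sup>2) powr \<alpha>"
      proof -
        have "cmod x0 * cmod x0 < 1 * 1" using x01 by (intro mult_strict_mono) auto
        then show ?thesis by (simp add: power2_eq_square)
      qed
      show ?thesis
      proof (intro exI ballI)
        fix \<phi> z assume \<phi>: "\<phi> \<in> \<H>" and z: "z \<in> K"
        have zb: "z \<in> ball 0 1" using z K(2) by auto
        have "cmod z * cmod z \<le> cmod x0 * cmod x0" using x0(2)[OF z] by (intro mult_mono) auto
        then have "(1 - (cmod x0)\<^sup>2) powr \<alpha> \<le> (1 - (cmod z)\<^sup>2) powr \<alpha>"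
          using x02 by (intro powr_mono2) (auto simp: power2_eq_square less_imp_le a)
        then have "(1 - (cmod x0)\<^sup>2) powr \<alpha> * cmod (\<phi> z) \<le> (1 - (cmod z)\<^sup>2) powr \<alpha> * cmod (\<phi> z)"
          by (rule mult_right_mono) simp
        also have "\<dots> \<le> B" using \<phi> zb by (auto simp: \<H>_def)
        finally show "cmod (\<phi> z) \<le> B / (1 - (cmod x0)\<^sup>2) powr \<alpha>"
          using pos by (simp add: field_simps)
      qed
    qed
    have rng: "range (\<lambda>n. deriv (F n)) \<subseteq> \<H>"
      using Hn holomorphic_deriv[OF holF open_ball] by (auto simp: \<H>_def)
    obtain k sq where khol: "k holomorphic_on ball 0 1" and sq: "strict_mono (sq :: nat \<Rightarrow> nat)"
      and kpt: "\<And>x. x \<in> ball 0 1 \<Longrightarrow> ((\<lambda>n. deriv (F (sq n)) x) \<longlongrightarrow> k x) sequentially"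
      and kun: "\<And>K. \<lbrakk>compact K; K \<subseteq> ball 0 1\<rbrakk> \<Longrightarrow> uniform_limit K ((\<lambda>n. deriv (F n)) \<circ> sq) k sequentially"
      by (rule Montel[OF open_ball _ bnd rng]) (auto simp: \<H>_def)
    have kb: "(1 - (cmod z)\<^sup>2) powr \<alpha> * cmod (k z) \<le> B" if z: "z \<in> ball 0 1" for z
    proof (rule LIMSEQ_le_const2)
      show "(\<lambda>n. (1 - (cmod z)\<^sup>2) powr \<alpha> * cmod (deriv (F (sq n)) z)) \<longlonglongrightarrow> (1 - (cmod z)\<^sup>2) powr \<alpha> * cmod (k z)"
        by (intro tendsto_mult_left tendsto_norm kpt z)
      show "\<exists>N. \<forall>n\<ge>N. (1 - (cmod z)\<^sup>2) powr \<alpha> * cmod (deriv (F (sq n)) z) \<le> B"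
        using Hn[OF z] by blast
    qed
    obtain p where p: "\<And>x. x \<in> ball 0 1 \<Longrightarrow> (p has_field_derivative k x) (at x within ball 0 1)"
      using holomorphic_convex_primitive'[OF convex_ball open_ball khol] by blast
    define h where "h z = p z - p 0" for z
    have hd: "(h has_field_derivative k z) (at z)" if z: "z \<in> ball 0 1" for z
    proof -
      have "(p has_field_derivative k z) (at z)"
        using p[OF z] unfolding at_within_open[OF z open_ball] .
      then show ?thesis unfolding h_def[abs_def] by (auto intro!: derivative_eq_intros)
    qed
    have hhol: "h holomorphic_on ball 0 1"
      unfolding holomorphic_on_open[OF open_ball] using hd by blast
    have h0: "h 0 = 0" by (simp add: h_def)
    have dh: "deriv h z = k z" if "z \<in> ball 0 1" for z
      by (rule DERIV_imp_deriv[OF hd[OF that]])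
    have hB: "h \<in> bloch0 \<alpha>"
      unfolding bloch0_def bloch_space_def
      using hhol h0 kb dh by (auto intro!: bdd_aboveI2[where M = B])
    have gB: "cesaro_op \<beta> h \<in> bloch0 \<alpha>" by (rule cesaro_in[OF a b1 b2 hB])
    have lim: "(\<lambda>n. bloch_norm \<alpha> (\<lambda>z. cesaro_op \<beta> (F (sq n)) z - cesaro_op \<beta> h z)) \<longlonglongrightarrow> 0"
    proof (rule LIMSEQ_I)
      fix e :: real assume e: "e > 0"
      define q where "q = e / (2 * Kc \<alpha> \<beta> * B + 1)"
      have KB: "0 \<le> 2 * Kc \<alpha> \<beta> * B" using cf B0 by simp
      have q: "q > 0" unfolding q_def by (intro divide_pos_pos e) (use KB in linarith)
      define t where "t = min (1/2) (q powr (1 / epsc \<alpha> \<beta>))"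
      have t: "0 < t" "t \<le> 1/2" using q by (auto simp: t_def)
      have tq: "t powr epsc \<alpha> \<beta> \<le> q"
      proof -
        have "t powr epsc \<alpha> \<beta> \<le> (q powr (1 / epsc \<alpha> \<beta>)) powr epsc \<alpha> \<beta>"
          by (rule powr_mono2) (use cf t in \<open>auto simp: t_def\<close>)
        also have "\<dots> = q" using cf q by (simp add: powr_powr)
        finally show ?thesis .
      qed
      define \<rho> where "\<rho> = 1 - t"
      have rho: "1/2 \<le> \<rho>" "\<rho> < 1" using t by (auto simp: \<rho>_def)
      have t1: "Kc \<alpha> \<beta> * (2 * B) * (1 - \<rho>) powr epsc \<alpha> \<beta> < e"
      proof -
        have "Kc \<alpha> \<beta> * (2 * B) * (1 - \<rho>) powr epsc \<alpha> \<beta> \<le> 2 * Kc \<alpha> \<beta> * B * q"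
        proof -
          have "1 - \<rho> = t" by (simp add: \<rho>_def)
          then have "Kc \<alpha> \<beta> * (2 * B) * (1 - \<rho>) powr epsc \<alpha> \<beta> = (2 * Kc \<alpha> \<beta> * B) * t powr epsc \<alpha> \<beta>"
            by simp
          also have "\<dots> \<le> 2 * Kc \<alpha> \<beta> * B * q" by (rule mult_left_mono[OF tq KB])
          finally show ?thesis .
        qed
        also have "\<dots> < e" using e KB by (simp add: q_def field_simps)
        finally show ?thesis .
      qed
      define C2 where "C2 = 2 powr \<bar>\<beta>\<bar> * (1 - \<rho>) powr (- bp \<beta>)"
      have C2: "C2 > 0" using rho by (simp add: C2_def)
      define \<eta> where "\<eta> = e / (2 * C2)"
      have eta: "\<eta> > 0" using e C2 by (simp add: \<eta>_def)
      have t2: "2 powr \<bar>\<beta>\<bar> * \<eta> * (1 - \<rho>) powr (- bp \<beta>) < e"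
        using e C2 by (simp add: \<eta>_def C2_def field_simps)
      have cb: "cball 0 \<rho> \<subseteq> ball (0::complex) 1" using rho by auto
      have "\<forall>\<^sub>F n in sequentially. \<forall>x\<in>cball 0 \<rho>. dist (((\<lambda>n. deriv (F n)) \<circ> sq) n x) (k x) < \<eta>"
        by (rule uniform_limitD[OF kun[OF compact_cball cb] eta])
      then obtain N where N0: "\<forall>n\<ge>N. \<forall>x\<in>cball 0 \<rho>. cmod (deriv (F (sq n)) x - k x) < \<eta>"
        by (auto simp: eventually_sequentially dist_norm)
      have N: "\<And>n x. n \<ge> N \<Longrightarrow> x \<in> cball 0 \<rho> \<Longrightarrow> cmod (deriv (F (sq n)) x - k x) < \<eta>"
        using N0 by blast
      show "\<exists>N. \<forall>n\<ge>N. norm (bloch_norm \<alpha> (\<lambda>z. cesaro_op \<beta> (F (sq n)) z - cesaro_op \<beta> h z) - 0) < e"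
      proof (intro exI allI impI)
        fix n assume n: "N \<le> n"
        define D where "D w = F (sq n) w - h w" for w
        have Dhol: "D holomorphic_on ball 0 1" unfolding D_def[abs_def]
          by (intro holomorphic_intros holF hhol)
        have D0: "D 0 = 0" by (simp add: D_def F0 h0)
        have dD: "deriv D w = deriv (F (sq n)) w - k w" if w: "w \<in> ball 0 1" for w
        proof -
          have "(F (sq n) has_field_derivative deriv (F (sq n)) w) (at w)"
            using holF w by (meson DERIV_deriv_iff_field_differentiable holomorphic_on_imp_differentiable_at open_ball)
          then have "(D has_field_derivative deriv (F (sq n)) w - k w) (at w)"
            unfolding D_def[abs_def] by (intro DERIV_diff hd w)
          then show ?thesis by (rule DERIV_imp_deriv)
        qed
        have bdD: "(1 - (cmod w)\<^sup>2) powr \<alpha> * cmod (deriv D w) \<le> 2 * B" if w: "w \<in> ball 0 1" for w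
        proof -
          have "(1 - (cmod w)\<^sup>2) powr \<alpha> * cmod (deriv D w)
                \<le> (1 - (cmod w)\<^sup>2) powr \<alpha> * (cmod (deriv (F (sq n)) w) + cmod (k w))"
            unfolding dD[OF w] by (intro mult_left_mono norm_triangle_ineq4) simp
          also have "\<dots> = (1 - (cmod w)\<^sup>2) powr \<alpha> * cmod (deriv (F (sq n)) w) + (1 - (cmod w)\<^sup>2) powr \<alpha> * cmod (k w)"
            by (simp add: algebra_simps)
          also have "\<dots> \<le> 2 * B" using Hn[OF w, of "sq n"] kb[OF w] by simp
          finally show ?thesis .
        qed
        have etaD: "cmod (deriv D w) \<le> \<eta>" if w: "w \<in> cball 0 \<rho>" for w
          using N[OF n w] dD[of w] w cb by auto
        have GD: "(1 - (cmod z)\<^sup>2) powr \<alpha> * cmod (Gc \<beta> D z) < e" if z: "z \<in> ball 0 1" for z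
        proof -
          have "(1 - (cmod z)\<^sup>2) powr \<alpha> * cmod (Gc \<beta> D z)
                \<le> max (Kc \<alpha> \<beta> * (2 * B) * (1 - \<rho>) powr (epsc \<alpha> \<beta>)) (2 powr \<bar>\<beta>\<bar> * \<eta> * (1 - \<rho>) powr (- bp \<beta>))"
            by (rule key_bound[OF a b1 b2 Dhol D0 _ bdD rho etaD z]) (use B0 in auto)
          also have "\<dots> < e" using t1 t2 by simp
          finally show ?thesis .
        qed
        have dC: "deriv (\<lambda>z. cesaro_op \<beta> (F (sq n)) z - cesaro_op \<beta> h z) z = Gc \<beta> D z"
          if z: "z \<in> ball 0 1" for z
        proof -
          have "((\<lambda>z. cesaro_op \<beta> (F (sq n)) z - cesaro_op \<beta> h z) has_field_derivative
                 Gc \<beta> (F (sq n)) z - Gc \<beta> h z) (at z)"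
            by (intro DERIV_diff cesaro_deriv holF F0 hhol h0 z)
          moreover have "Gc \<beta> (F (sq n)) z - Gc \<beta> h z = Gc \<beta> D z"
          proof (cases "z = 0")
            case True then show ?thesis using dD[OF z] dh[OF z] by (simp add: Gc_def)
          next
            case False then show ?thesis by (simp add: Gc_def D_def diff_divide_distrib)
          qed
          ultimately show ?thesis by (simp add: DERIV_imp_deriv)
        qed
        have eqn: "bloch_norm \<alpha> (\<lambda>z. cesaro_op \<beta> (F (sq n)) z - cesaro_op \<beta> h z)
                   = (SUP z\<in>ball 0 1. (1 - (cmod z)\<^sup>2) powr \<alpha> * cmod (Gc \<beta> D z))"
          unfolding bloch_norm_def by (intro SUP_cong refl) (simp add: dC)
        have bdd: "bdd_above ((\<lambda>z. (1 - (cmod z)\<^sup>2) powr \<alpha> * cmod (Gc \<beta> D z)) ` ball 0 1)"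
          by (rule bdd_aboveI2[where M = e]) (use GD in \<open>auto intro: less_imp_le\<close>)
        have up: "(SUP z\<in>ball 0 1. (1 - (cmod z)\<^sup>2) powr \<alpha> * cmod (Gc \<beta> D z)) < e"
        proof -
          have "(SUP z\<in>ball 0 1. (1 - (cmod z)\<^sup>2) powr \<alpha> * cmod (Gc \<beta> D z))
                \<le> max (Kc \<alpha> \<beta> * (2 * B) * (1 - \<rho>) powr (epsc \<alpha> \<beta>)) (2 powr \<bar>\<beta>\<bar> * \<eta> * (1 - \<rho>) powr (- bp \<beta>))"
            by (rule cSUP_least) (auto intro!: key_bound[OF a b1 b2 Dhol D0 _ bdD rho etaD] simp: B0)
          also have "\<dots> < e" using t1 t2 by simp
          finally show ?thesis .
        qed
        have lo: "0 \<le> (SUP z\<in>ball 0 1. (1 - (cmod z)\<^sup>2) powr \<alpha> * cmod (Gc \<beta> D z))"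
          by (rule cSUP_upper2[OF bdd, of 0]) auto
        show "norm (bloch_norm \<alpha> (\<lambda>z. cesaro_op \<beta> (F (sq n)) z - cesaro_op \<beta> h z) - 0) < e"
          using up lo eqn by simp
      qed
    qed
    show ?thesis using sq gB lim by blast
  qed
  show ?thesis unfolding compact_bloch0_operator_def
    using P1 P2 P3 by blast
qed


end
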